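(* Let $\mathcal{K}^{\langle\infty\rangle}$ be an unbounded simple nested fractal with the good labelling property. Then for every $M\in\mathbb{Z}$ the good labelling function of order $M$ is unique up to a permutation of the alphabet $\mathcal{A}$: if $\ell_M,\ell_M'$ are good labelling functions of order $M$, then $\ell_M=\sigma\circ\ell'_M$ for some permutation $\sigma$ of $\mathcal{A}$. In particular, for every bijection $\widetilde{\ell}_M:V_M^{\langle M\rangle}\to\mathcal{A}$ there exists a unique good labelling function $\ell_M:V_M^{\langle\infty\rangle}\to\mathcal{A}$ of order $M$ with $\ell_M|_{V_M^{\langle M\rangle}}=\widetilde{\ell}_M$.
   Context: Setting: $L>1$, $N\ge2$, $\nu_1=0,\dots,\nu_N\in\mathbb{R}^2$, $\Psi_i(x)=x/L+\nu_i$, and $\mathcal{K}^{\langle 0\rangle}=\bigcup_i\Psi_i(\mathcal{K}^{\langle 0\rangle})$ is a planar simple nested fractal (i.e. with $V_0^{\langle0\rangle}$ the set of essential fixed points — fixed points $x$ for which there are another fixed point $y$ and $\Psi_i\ne\Psi_j$ with $\Psi_i(x)=\Psi_j(y)$ — the open set condition, nesting $\Psi_i(\mathcal{K}^{\langle 0\rangle})\cap\Psi_j(\mathcal{K}^{\langle 0\rangle})=\Psi_i(V_0^{\langle 0\rangle})\cap\Psi_j(V_0^{\langle 0\rangle})$ for $i\ne j$, the symmetry condition with respect to perpendicular bisectors of pairs of essential fixed points, and connectivity hold). Let $k=\#V_0^{\langle0\rangle}\ge 3$; then $V_0^{\langle0\rangle}$ is the vertex set of a regular $k$-gon. For $M\in\mathbb{Z}$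 put $\mathcal{K}^{\langle M\rangle}=L^M\mathcal{K}^{\langle 0\rangle}$ and $\mathcal{K}^{\langle\infty\rangle}=\bigcup_{M\ge0}\mathcal{K}^{\langle M\rangle}$. An $M$-complex is a set $\Delta_M=\mathcal{K}^{\langle M\rangle}+\nu_{\Delta_M}$ with $\nu_{\Delta_M}=\sum_{j=M+1}^{J}L^j\nu_{i_j}$ for some $J\ge M+1$, $i_j\in\{1,\dots,N\}$; its vertex set is $V(\Delta_M)=L^MV_0^{\langle0\rangle}+\nu_{\Delta_M}$. Let $V_M^{\langle M\rangle}=L^MV_0^{\langle0\rangle}$ and $V_M^{\langle\infty\rangle}$ the union of $V(\Delta_M)$ over all $M$-complexes. Let $\mathcal{A}$ be an alphabet of $k$ symbols and $\mathcal{R}_M$ the set of the $k$ rotations about the barycenter of $\mathcal{K}^{\langle M\rangle}$ mapping $V_M^{\langle M\rangle}$ onto itself. A good labelling function of order $M$ is a map $\ell_M:V_M^{\langle\infty\rangle}\to\mathcal{A}$ such that (1) $\ell_M|_{V_M^{\langle M\rangle}}$ is a bijection onto $\mathcal{A}$, and (2) for every $M$-complex $\Delta_M=\mathcal{K}^{\langle M\rangle}+\nu_{\Delta_M}$ there is $R_{\Delta_M}\in\mathcal{R}_M$ with $\ell_M(v)=\ell_M(R_{\Delta_M}(v-\nu_{\Delta_M}))$ for all $v\in V(\Delta_M)$. $\mathcal{K}^{\langle\infty\rangle}$ has the good labelling property (GLP) if a good labelling function of some order $M$ exists (equivalently, by self-similarity, of every order). *)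

theory Defs
  imports "HOL-Analysis.Analysis"
begin

text \<open>The plane R^2 is identified with the complex numbers. The similitudes are
  Psi_i(x) = x / L + nu_i, for i in {1..N}.\<close>

definition Psi :: "real \<Rightarrow> (nat \<Rightarrow> complex) \<Rightarrow> nat \<Rightarrow> complex \<Rightarrow> complex" where
  "Psi L \<nu> i x = x / of_real L + \<nu> i"

definition Psi_word :: "real \<Rightarrow> (nat \<Rightarrow> complex) \<Rightarrow> nat list \<Rightarrow> complex \<Rightarrow> complex" where
  "Psi_word L \<nu> ws = foldr (\<lambda>i f. Psi L \<nu> i \<circ> f) ws id"

definition fixed_points :: "real \<Rightarrow> nat \<Rightarrow> (nat \<Rightarrow> complex) \<Rightarrow> complex set" where
  "fixed_points L N \<nu> = {x. \<exists>i\<in>{1..N}. Psi L \<nu> i x = x}"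

definition V0 :: "real \<Rightarrow> nat \<Rightarrow> (nat \<Rightarrow> complex) \<Rightarrow> complex set" where
  "V0 L N \<nu> = {x \<in> fixed_points L N \<nu>. \<exists>y \<in> fixed_points L N \<nu>. \<exists>i\<in>{1..N}. \<exists>j\<in>{1..N}.
      Psi L \<nu> i \<noteq> Psi L \<nu> j \<and> Psi L \<nu> i x = Psi L \<nu> j y}"

definition Vn :: "real \<Rightarrow> nat \<Rightarrow> (nat \<Rightarrow> complex) \<Rightarrow> nat \<Rightarrow> complex set" where
  "Vn L N \<nu> n = (\<Union>ws \<in> {ws. length ws = n \<and> set ws \<subseteq> {1..N}}. Psi_word L \<nu> ws ` V0 L N \<nu>)"

definition refl_bisector :: "complex \<Rightarrow> complex \<Rightarrow> complex \<Rightarrow> complex" where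
  "refl_bisector x y z =
     z - of_real (2 * ((z - (x + y) / 2) \<bullet> (y - x)) / (norm (y - x))\<^sup>2) * (y - x)"

definition open_set_condition :: "real \<Rightarrow> nat \<Rightarrow> (nat \<Rightarrow> complex) \<Rightarrow> bool" where
  "open_set_condition L N \<nu> \<longleftrightarrow>
     (\<exists>U. open U \<and> bounded U \<and> U \<noteq> {} \<and> (\<forall>i\<in>{1..N}. Psi L \<nu> i ` U \<subseteq> U) \<and>
          (\<forall>i\<in>{1..N}. \<forall>j\<in>{1..N}. i \<noteq> j \<longrightarrow> Psi L \<nu> i ` U \<inter> Psi L \<nu> j ` U = {}))"

definition nesting_condition :: "real \<Rightarrow> nat \<Rightarrow> (nat \<Rightarrow> complex) \<Rightarrow> complex set \<Rightarrow> bool" where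
  "nesting_condition L N \<nu> K \<longleftrightarrow>
     (\<forall>i\<in>{1..N}. \<forall>j\<in>{1..N}. i \<noteq> j \<longrightarrow>
        Psi L \<nu> i ` K \<inter> Psi L \<nu> j ` K = Psi L \<nu> i ` V0 L N \<nu> \<inter> Psi L \<nu> j ` V0 L N \<nu>)"

definition symmetry_condition :: "real \<Rightarrow> nat \<Rightarrow> (nat \<Rightarrow> complex) \<Rightarrow> bool" where
  "symmetry_condition L N \<nu> \<longleftrightarrow>
     (\<forall>x\<in>V0 L N \<nu>. \<forall>y\<in>V0 L N \<nu>. x \<noteq> y \<longrightarrow>
        (\<forall>n. refl_bisector x y ` Vn L N \<nu> n \<subseteq> Vn L N \<nu> n))"

definition connectivity_condition :: "real \<Rightarrow> nat \<Rightarrow> (nat \<Rightarrow> complex) \<Rightarrow> bool" where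
  "connectivity_condition L N \<nu> \<longleftrightarrow>
     (\<forall>i\<in>{1..N}. \<forall>j\<in>{1..N}.
        (i, j) \<in> {(a, b). a \<in> {1..N} \<and> b \<in> {1..N} \<and>
                   Psi L \<nu> a ` V0 L N \<nu> \<inter> Psi L \<nu> b ` V0 L N \<nu> \<noteq> {}}\<^sup>*)"

definition planar_simple_nested_fractal ::
    "real \<Rightarrow> nat \<Rightarrow> (nat \<Rightarrow> complex) \<Rightarrow> complex set \<Rightarrow> bool" where
  "planar_simple_nested_fractal L N \<nu> K \<longleftrightarrow>
     L > 1 \<and> N \<ge> 2 \<and> \<nu> 1 = 0 \<and>
     compact K \<and> K \<noteq> {} \<and> K = (\<Union>i\<in>{1..N}. Psi L \<nu> i ` K) \<and>
     open_set_condition L N \<nu> \<and> nesting_condition L N \<nu> K \<and>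
     symmetry_condition L N \<nu> \<and> connectivity_condition L N \<nu> \<and>
     card (V0 L N \<nu>) \<ge> 3"

definition scaleL :: "real \<Rightarrow> int \<Rightarrow> complex set \<Rightarrow> complex set" where
  "scaleL L M S = (\<lambda>z. of_real (L powi M) * z) ` S"

definition complex_shifts :: "real \<Rightarrow> nat \<Rightarrow> (nat \<Rightarrow> complex) \<Rightarrow> int \<Rightarrow> complex set" where
  "complex_shifts L N \<nu> M =
     {(\<Sum>j\<in>{M+1..J}. of_real (L powi j) * \<nu> (ii j)) | J ii.
        J \<ge> M + 1 \<and> (\<forall>j\<in>{M+1..J}. ii j \<in> {1..N})}"

definition VMM :: "real \<Rightarrow> nat \<Rightarrow> (nat \<Rightarrow> complex) \<Rightarrow> int \<Rightarrow> complex set" where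
  "VMM L N \<nu> M = scaleL L M (V0 L N \<nu>)"

definition complex_vertices :: "real \<Rightarrow> nat \<Rightarrow> (nat \<Rightarrow> complex) \<Rightarrow> int \<Rightarrow> complex \<Rightarrow> complex set" where
  "complex_vertices L N \<nu> M s = (\<lambda>v. v + s) ` VMM L N \<nu> M"

definition VMinf :: "real \<Rightarrow> nat \<Rightarrow> (nat \<Rightarrow> complex) \<Rightarrow> int \<Rightarrow> complex set" where
  "VMinf L N \<nu> M = (\<Union>s \<in> complex_shifts L N \<nu> M. complex_vertices L N \<nu> M s)"

text \<open>Barycenter of K^<M>; by the symmetry of the nested fractal it is the centre of the
  regular polygon V_M^<M>, i.e. the centroid of its vertices.\<close>
definition barycenter :: "real \<Rightarrow> nat \<Rightarrow> (nat \<Rightarrow> complex) \<Rightarrow> int \<Rightarrow> complex" where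
  "barycenter L N \<nu> M = (\<Sum>v\<in>VMM L N \<nu> M. v) / of_nat (card (VMM L N \<nu> M))"

definition rotations :: "real \<Rightarrow> nat \<Rightarrow> (nat \<Rightarrow> complex) \<Rightarrow> int \<Rightarrow> (complex \<Rightarrow> complex) set" where
  "rotations L N \<nu> M =
     {R. \<exists>a. norm a = 1 \<and>
          R = (\<lambda>z. barycenter L N \<nu> M + a * (z - barycenter L N \<nu> M)) \<and>
          R ` VMM L N \<nu> M = VMM L N \<nu> M}"

text \<open>Good labelling function of order M with values in the alphabet A.
  (Only the values on V_M^<infinity> matter.)\<close>
definition good_labelling ::
    "real \<Rightarrow> nat \<Rightarrow> (nat \<Rightarrow> complex) \<Rightarrow> 'a set \<Rightarrow> int \<Rightarrow> (complex \<Rightarrow> 'a) \<Rightarrow> bool" where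
  "good_labelling L N \<nu> A M lab \<longleftrightarrow>
     lab ` VMinf L N \<nu> M \<subseteq> A \<and>
     bij_betw lab (VMM L N \<nu> M) A \<and>
     (\<forall>s\<in>complex_shifts L N \<nu> M. \<exists>R\<in>rotations L N \<nu> M.
        \<forall>v\<in>complex_vertices L N \<nu> M s. lab v = lab (R (v - s)))"

definition good_labelling_property ::
    "real \<Rightarrow> nat \<Rightarrow> (nat \<Rightarrow> complex) \<Rightarrow> 'a set \<Rightarrow> bool" where
  "good_labelling_property L N \<nu> A \<longleftrightarrow> (\<exists>M lab. good_labelling L N \<nu> A M lab)"

end

theory Submission
  imports Defs
begin


lemma Vn0: "Vn L N \<nu> 0 = V0 L N \<nu>"
proof -
  have "{ws::nat list. length ws = 0 \<and> set ws \<subseteq> {1..N}} = {[]}" by auto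
  then show ?thesis unfolding Vn_def Psi_word_def by simp
qed

lemma inner_ofreal_left: "(complex_of_real r * d) \<bullet> e = r * (d \<bullet> e)"
  by (simp add: inner_complex_def algebra_simps)

lemma inner_ofnat_left: "(complex_of_nat n * d) \<bullet> e = real n * (d \<bullet> e)"
  by (simp add: inner_complex_def algebra_simps)

lemma refl_inj:
  assumes "x \<noteq> y" shows "inj (refl_bisector x y)"
proof (rule injI)
  fix z w assume h: "refl_bisector x y z = refl_bisector x y w"
  define d where "d = y - x"
  define m where "m = (x + y) / 2"
  have dn: "d \<noteq> 0" using assms d_def by auto
  have nd: "(norm d)\<^sup>2 = d \<bullet> d" by (simp add: power2_norm_eq_inner)
  have ndp: "d \<bullet> d > 0" using dn by simp
  define t where "t = 2 * ((z - m) \<bullet> d) / (norm d)\<^sup>2 - 2 * ((w - m) \<bullet> d) / (norm d)\<^sup>2"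
  have e: "z - w = of_real t * d"
    using h unfolding refl_bisector_def d_def[symmetric] m_def[symmetric] t_def
    by (simp add: algebra_simps)
  have ht: "(z - w) \<bullet> d = t * (d \<bullet> d)"
    using e inner_ofreal_left by simp
  also have "\<dots> = (2 * ((z - m) \<bullet> d) / (norm d)\<^sup>2 - 2 * ((w - m) \<bullet> d) / (norm d)\<^sup>2) * (d \<bullet> d)"
    unfolding t_def ..
  also have "\<dots> = 2 * ((z - w) \<bullet> d)" using ndp unfolding nd
    by (simp add: field_simps inner_diff_left)
  finally have "(z - w) \<bullet> d = 0" by simp
  then have "t = 0" using ht ndp by simp
  then have "z - w = 0" using e by simp
  then show "z = w" by simp
qed

lemma centroid_ne:
  fixes V :: "complex set"
  assumes fin: "finite V" and c2: "card V \<ge> 2"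
    and sym: "\<forall>x\<in>V. \<forall>y\<in>V. x \<noteq> y \<longrightarrow> refl_bisector x y ` V \<subseteq> V"
    and xV: "x \<in> V"
  shows "x \<noteq> (\<Sum>v\<in>V. v) / of_nat (card V)"
proof
  define c where "c = (\<Sum>v\<in>V. v) / of_nat (card V)"
  assume xc: "x = (\<Sum>v\<in>V. v) / of_nat (card V)"
  have "\<exists>y\<in>V. y \<noteq> x"
  proof (rule ccontr)
    assume "\<not> (\<exists>y\<in>V. y \<noteq> x)"
    then have "V \<subseteq> {x}" by auto
    then have "card V \<le> 1" using card_mono[of "{x}" V] by simp
    then show False using c2 by simp
  qed
  then obtain y where yV: "y \<in> V" and yx: "y \<noteq> x" by blast
  define d where "d = y - x"
  define m where "m = (x + y) / 2"
  have dn: "d \<noteq> 0" using yx d_def by auto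
  define f where "f = (\<lambda>v. of_real (2 / (norm d)\<^sup>2 * ((v - m) \<bullet> d)) * d)"
  have rho: "refl_bisector x y v = v - f v" for v
    unfolding refl_bisector_def f_def d_def m_def by simp
  have inj: "inj_on (refl_bisector x y) V" using refl_inj[OF yx[symmetric]] by (simp add: inj_on_def inj_def)
  have sub: "refl_bisector x y ` V \<subseteq> V" by (rule sym[rule_format, OF xV yV yx[symmetric]])
  have img: "refl_bisector x y ` V = V"
    using card_subset_eq[OF fin sub] card_image[OF inj] by simp
  have "(\<Sum>v\<in>V. refl_bisector x y v) = (\<Sum>v\<in>V. v)"
    using sum.reindex[OF inj, of id] img by simp
  then have "(\<Sum>v\<in>V. f v) = 0" unfolding rho by (simp add: sum_subtractf)
  moreover have "(\<Sum>v\<in>V. f v) = of_real (\<Sum>v\<in>V. 2 / (norm d)\<^sup>2 * ((v - m) \<bullet> d)) * d"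
    unfolding f_def by (simp add: sum_distrib_right)
  ultimately have "of_real (2 / (norm d)\<^sup>2 * (\<Sum>v\<in>V. (v - m) \<bullet> d)) * d = 0"
    by (simp add: sum_distrib_left)
  then have s0: "(\<Sum>v\<in>V. (v - m) \<bullet> d) = 0" using dn by (simp add: of_real_sum[symmetric] del: of_real_sum)
  have "(\<Sum>v\<in>V. (v - m) \<bullet> d) = ((\<Sum>v\<in>V. v) - of_nat (card V) * m) \<bullet> d"
    by (simp add: inner_sum_left inner_diff_left sum_subtractf inner_ofnat_left)
  also have "(\<Sum>v\<in>V. v) = of_nat (card V) * x" using xc c2 by simp
  finally have "(of_nat (card V) * (x - m)) \<bullet> d = 0" using s0 by (simp add: algebra_simps)
  then have "real (card V) * ((x - m) \<bullet> d) = 0"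
    by (simp add: inner_ofnat_left)
  then have q: "(x - m) \<bullet> d = 0" using c2 by simp
  have "x - m = - (d / 2)" by (simp add: m_def d_def field_simps)
  then have "(x - m) \<bullet> d = - (d \<bullet> d) / 2"
    by (simp add: inner_complex_def)
  then have "d \<bullet> d = 0" using q by simp
  then show False using dn by simp
qed

lemma VMM_eq: "VMM L N \<nu> M = (\<lambda>z. complex_of_real (L powi M) * z) ` V0 L N \<nu>"
  by (simp add: VMM_def scaleL_def)

lemma fractal_facts:
  assumes "planar_simple_nested_fractal L N \<nu> K"
  shows "L > 1" "N \<ge> 2" "\<nu> 1 = 0" "finite (V0 L N \<nu>)" "card (V0 L N \<nu>) \<ge> 3"
    "symmetry_condition L N \<nu>" "connectivity_condition L N \<nu>"
  using assms unfolding planar_simple_nested_fractal_def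
  by (auto intro: card_ge_0_finite)

lemma bary_ne:
  assumes fr: "planar_simple_nested_fractal L N \<nu> K"
    and u: "u \<in> VMM L N \<nu> M"
  shows "u \<noteq> barycenter L N \<nu> M"
proof -
  note ff = fractal_facts[OF fr]
  define V where "V = V0 L N \<nu>"
  define lam where "lam = complex_of_real (L powi M)"
  have lam0: "lam \<noteq> 0" using ff(1) unfolding lam_def by simp
  have inj: "inj_on (\<lambda>z. lam * z) V" using lam0 by (auto simp: inj_on_def)
  have vmm: "VMM L N \<nu> M = (\<lambda>z. lam * z) ` V" unfolding VMM_eq lam_def V_def ..
  have sumeq: "(\<Sum>v\<in>VMM L N \<nu> M. v) = lam * (\<Sum>v\<in>V. v)"
    unfolding vmm by (simp add: sum.reindex[OF inj] sum_distrib_left)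
  have cardeq: "card (VMM L N \<nu> M) = card V" unfolding vmm using card_image[OF inj] .
  have bc: "barycenter L N \<nu> M = lam * ((\<Sum>v\<in>V. v) / of_nat (card V))"
    unfolding barycenter_def sumeq cardeq by simp
  obtain x where xV: "x \<in> V" and ux: "u = lam * x" using u unfolding vmm by auto
  have sym: "\<forall>x\<in>V. \<forall>y\<in>V. x \<noteq> y \<longrightarrow> refl_bisector x y ` V \<subseteq> V"
    using ff(6) unfolding symmetry_condition_def V_def by (metis Vn0)
  have "x \<noteq> (\<Sum>v\<in>V. v) / of_nat (card V)"
    by (rule centroid_ne) (use ff(4,5) sym xV in \<open>auto simp: V_def\<close>)
  then show ?thesis unfolding bc ux using lam0 by (metis mult_left_cancel)
qed

lemma rot_det:
  assumes nb: "\<forall>u\<in>VMM L N \<nu> M. u \<noteq> barycenter L N \<nu> M"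
    and g: "good_labelling L N \<nu> A M lab" and g': "good_labelling L N \<nu> A M lab'"
    and agree: "\<forall>v\<in>VMM L N \<nu> M. lab v = lab' v"
    and s: "s \<in> complex_shifts L N \<nu> M"
    and v0: "v0 \<in> complex_vertices L N \<nu> M s" and l0: "lab v0 = lab' v0"
  shows "\<forall>v\<in>complex_vertices L N \<nu> M s. lab v = lab' v"
proof -
  define c where "c = barycenter L N \<nu> M"
  define VM where "VM = VMM L N \<nu> M"
  obtain R where R: "R \<in> rotations L N \<nu> M"
    and HR: "\<forall>v\<in>complex_vertices L N \<nu> M s. lab v = lab (R (v - s))"
    using g s unfolding good_labelling_def by blast
  obtain R' where R': "R' \<in> rotations L N \<nu> M"
    and HR': "\<forall>v\<in>complex_vertices L N \<nu> M s. lab' v = lab' (R' (v - s))"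
    using g' s unfolding good_labelling_def by blast
  obtain a where Ra: "R = (\<lambda>z. c + a * (z - c))" and RV: "R ` VM = VM"
    using R unfolding rotations_def c_def VM_def by blast
  obtain a' where Ra': "R' = (\<lambda>z. c + a' * (z - c))" and RV': "R' ` VM = VM"
    using R' unfolding rotations_def c_def VM_def by blast
  have inj: "inj_on lab VM" using g unfolding good_labelling_def VM_def bij_betw_def by blast
  have cv: "complex_vertices L N \<nu> M s = (\<lambda>v. v + s) ` VM"
    unfolding complex_vertices_def VM_def ..
  obtain u0 where u0: "u0 \<in> VM" and vu: "v0 = u0 + s" using v0 unfolding cv by auto
  have Ru0: "R u0 \<in> VM" "R' u0 \<in> VM" using RV RV' u0 by auto
  have "lab (R u0) = lab v0" using HR v0 vu by simp
  also have "\<dots> = lab' v0" by (rule l0)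
  also have "\<dots> = lab' (R' u0)" using HR' v0 vu by simp
  also have "\<dots> = lab (R' u0)" using agree Ru0 unfolding VM_def by simp
  finally have "R u0 = R' u0" using inj Ru0 by (meson inj_on_def)
  then have "a * (u0 - c) = a' * (u0 - c)" unfolding Ra Ra' by simp
  moreover have "u0 - c \<noteq> 0" using nb u0 unfolding VM_def c_def by auto
  ultimately have "a = a'" by simp
  then have RR: "R = R'" unfolding Ra Ra' by simp
  show ?thesis
  proof
    fix v assume v: "v \<in> complex_vertices L N \<nu> M s"
    then have vs: "v - s \<in> VM" unfolding cv by auto
    then have "R (v - s) \<in> VM" using RV by auto
    then have "lab (R (v - s)) = lab' (R (v - s))" using agree unfolding VM_def by simp
    then show "lab v = lab' v" using HR HR' v RR by simp
  qed
qed



definition G :: "real \<Rightarrow> nat \<Rightarrow> (nat \<Rightarrow> complex) \<Rightarrow> int \<Rightarrow> nat \<Rightarrow> complex set" where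
  "G L N \<nu> M d = {(\<Sum>j\<in>{M+1..M + int d}. of_real (L powi j) * \<nu> (ii j)) | ii.
       \<forall>j\<in>{M+1..M + int d}. ii j \<in> {1..N}}"

lemma int_ivl_Suc: "{M+1..M + int (Suc d)} = insert (M + int d + 1) {M+1..M + int d}"
  by auto

lemma sum_ivl_Suc:
  "(\<Sum>j\<in>{M+1..M + int (Suc d)}. f j) = (\<Sum>j\<in>{M+1..M + int d}. f j) + f (M + int d + 1)"
  unfolding int_ivl_Suc by (subst sum.insert) (auto simp: add.commute)

lemma shiftsI:
  "s = (\<Sum>j\<in>{M+1..J}. of_real (L powi j) * \<nu> (ii j)) \<Longrightarrow> J \<ge> M+1 \<Longrightarrow>
   \<forall>j\<in>{M+1..J}. ii j \<in> {1..N} \<Longrightarrow> s \<in> complex_shifts L N \<nu> M"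
  unfolding complex_shifts_def by blast

lemma GI:
  "s = (\<Sum>j\<in>{M+1..M + int d}. of_real (L powi j) * \<nu> (ii j)) \<Longrightarrow>
   \<forall>j\<in>{M+1..M + int d}. ii j \<in> {1..N} \<Longrightarrow> s \<in> G L N \<nu> M d"
  unfolding G_def by blast

lemma zero_shift:
  assumes "\<nu> 1 = 0" "N \<ge> 1"
  shows "0 \<in> complex_shifts L N \<nu> M"
  by (rule shiftsI[where ii="\<lambda>_. 1" and J="M+1"]) (use assms in auto)

lemma G_zero: "G L N \<nu> M 0 = {0}"
  unfolding G_def by auto

lemma zero_G:
  assumes "\<nu> 1 = 0" "N \<ge> 1"
  shows "0 \<in> G L N \<nu> M d"
  by (rule GI[where ii="\<lambda>_. 1"]) (use assms in auto)

lemma G_shifts: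
  assumes "\<nu> 1 = 0" "N \<ge> 1"
  shows "G L N \<nu> M d \<subseteq> complex_shifts L N \<nu> M"
proof (cases d)
  case 0
  then show ?thesis using G_zero zero_shift[where \<nu>=\<nu> and N=N and L=L and M=M, OF assms(1) assms(2)] by simp
next
  case (Suc d')
  show ?thesis
  proof
    fix s assume "s \<in> G L N \<nu> M d"
    then obtain ii where s: "s = (\<Sum>j\<in>{M+1..M + int d}. of_real (L powi j) * \<nu> (ii j))"
      and ii: "\<forall>j\<in>{M+1..M + int d}. ii j \<in> {1..N}" unfolding G_def by blast
    have "M + int d \<ge> M + 1" using Suc by simp
    then show "s \<in> complex_shifts L N \<nu> M" unfolding complex_shifts_def using s ii by blast
  qed
qed

lemma shifts_G:
  assumes "s \<in> complex_shifts L N \<nu> M"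
  shows "\<exists>d. s \<in> G L N \<nu> M d"
proof -
  obtain J ii where s: "s = (\<Sum>j\<in>{M+1..J}. of_real (L powi j) * \<nu> (ii j))"
    and J: "J \<ge> M + 1" and ii: "\<forall>j\<in>{M+1..J}. ii j \<in> {1..N}"
    using assms unfolding complex_shifts_def by blast
  have e: "M + int (nat (J - M)) = J" using J by simp
  have "s \<in> G L N \<nu> M (nat (J - M))"
    by (rule GI[where ii=ii]) (unfold e, simp add: s, rule ii)
  then show ?thesis by blast
qed

lemma G_Suc_decomp:
  assumes "s \<in> G L N \<nu> M (Suc d)"
  shows "\<exists>s0 i. s0 \<in> G L N \<nu> M d \<and> i \<in> {1..N} \<and> s = s0 + of_real (L powi (M + int d + 1)) * \<nu> i"
proof -
  obtain ii where s: "s = (\<Sum>j\<in>{M+1..M + int (Suc d)}. of_real (L powi j) * \<nu> (ii j))"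
    and ii: "\<forall>j\<in>{M+1..M + int (Suc d)}. ii j \<in> {1..N}" using assms unfolding G_def by blast
  have "(\<Sum>j\<in>{M+1..M + int d}. of_real (L powi j) * \<nu> (ii j)) \<in> G L N \<nu> M d"
    unfolding G_def using ii int_ivl_Suc by blast
  moreover have "ii (M + int d + 1) \<in> {1..N}" using ii int_ivl_Suc by blast
  ultimately show ?thesis using s sum_ivl_Suc by blast
qed

lemma G_Suc_comp:
  assumes "s0 \<in> G L N \<nu> M d" "i \<in> {1..N}"
  shows "s0 + of_real (L powi (M + int d + 1)) * \<nu> i \<in> G L N \<nu> M (Suc d)"
proof -
  obtain ii where s: "s0 = (\<Sum>j\<in>{M+1..M + int d}. of_real (L powi j) * \<nu> (ii j))"
    and ii: "\<forall>j\<in>{M+1..M + int d}. ii j \<in> {1..N}" using assms unfolding G_def by blast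
  define jj where "jj = ii(M + int d + 1 := i)"
  have e: "(\<Sum>j\<in>{M+1..M + int d}. of_real (L powi j) * \<nu> (jj j)) = s0"
    unfolding s jj_def by (rule sum.cong) auto
  have "(\<Sum>j\<in>{M+1..M + int (Suc d)}. of_real (L powi j) * \<nu> (jj j)) =
     s0 + of_real (L powi (M + int d + 1)) * \<nu> i"
    unfolding sum_ivl_Suc e by (simp add: jj_def)
  moreover have "\<forall>j\<in>{M+1..M + int (Suc d)}. jj j \<in> {1..N}"
    unfolding int_ivl_Suc jj_def using ii assms(2) by auto
  ultimately show ?thesis by (intro GI[where ii=jj]) simp_all
qed

lemma fix_nu:
  assumes "x \<in> V0 L N \<nu>"
  shows "\<exists>k\<in>{1..N}. \<nu> k = x - x / of_real L"
proof -
  have "x \<in> fixed_points L N \<nu>" using assms unfolding V0_def by blast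
  then obtain k where k: "k \<in> {1..N}" "Psi L \<nu> k x = x" unfolding fixed_points_def by blast
  then have "\<nu> k = x - x / of_real L" unfolding Psi_def by (simp add: algebra_simps)
  then show ?thesis using k by blast
qed

lemma powi_Suc_split:
  assumes "L > 1"
  shows "complex_of_real (L powi (M + int d + 1)) = complex_of_real (L powi (M + int d)) * of_real L"
  using assms by (simp add: power_int_add_1)

lemma fixpt_shift:
  assumes L: "L > 1" and k: "k \<in> {1..N}" and nk: "\<nu> k = x - x / of_real L"
  shows "\<exists>s\<in>G L N \<nu> M d. of_real (L powi (M + int d)) * x = of_real (L powi M) * x + s"
proof -
  have "of_real (L powi (M + int d)) * x =
        of_real (L powi M) * x + (\<Sum>j\<in>{M+1..M + int d}. of_real (L powi j) * \<nu> k)"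
  proof (induction d)
    case 0
    then show ?case by simp
  next
    case (Suc d)
    define P where "P = complex_of_real (L powi (M + int d))"
    have L0: "complex_of_real L \<noteq> 0" using L by simp
    have e2: "complex_of_real (L powi (M + int d + 1)) = P * of_real L"
      using powi_Suc_split[OF L, of M d] unfolding P_def .
    have eq: "M + int (Suc d) = M + int d + 1" by simp
    have e1: "complex_of_real (L powi (M + int (Suc d))) = P * of_real L"
      unfolding eq by (rule e2)
    have e3: "P * of_real L * (x - x / of_real L) = P * of_real L * x - P * x"
      using L0 by (simp add: field_simps)
    have e4: "P * of_real L * \<nu> k = P * of_real L * x - P * x" using nk e3 by simp
    define Q where "Q = complex_of_real (L powi M)"
    define S where "S = (\<Sum>j\<in>{M+1..M + int d}. of_real (L powi j) * \<nu> k)"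
    have IH: "P * x = Q * x + S" using Suc.IH unfolding P_def Q_def S_def .
    show ?case unfolding sum_ivl_Suc e1 e2 e4 Q_def[symmetric] S_def[symmetric]
      using IH by (simp add: algebra_simps)
  qed
  moreover have "(\<Sum>j\<in>{M+1..M + int d}. of_real (L powi j) * \<nu> k) \<in> G L N \<nu> M d"
    by (rule GI[where ii="\<lambda>_. k"]) (use k in auto)
  ultimately show ?thesis by blast
qed

definition Ed :: "real \<Rightarrow> nat \<Rightarrow> (nat \<Rightarrow> complex) \<Rightarrow> int \<Rightarrow> nat \<Rightarrow> (complex \<times> complex) set" where
  "Ed L N \<nu> M d = {(s, s'). s \<in> G L N \<nu> M d \<and> s' \<in> G L N \<nu> M d \<and>
     complex_vertices L N \<nu> M s \<inter> complex_vertices L N \<nu> M s' \<noteq> {}}"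

lemma cv_translate:
  "complex_vertices L N \<nu> M (s + t) = (\<lambda>v. v + t) ` complex_vertices L N \<nu> M s"
  unfolding complex_vertices_def image_image by (simp add: add.assoc)

lemma translate_chain:
  assumes "(s, s') \<in> (Ed L N \<nu> M d)\<^sup>*" "i \<in> {1..N}"
  shows "(s + of_real (L powi (M + int d + 1)) * \<nu> i, s' + of_real (L powi (M + int d + 1)) * \<nu> i)
           \<in> (Ed L N \<nu> M (Suc d))\<^sup>*"
  using assms(1)
proof (induction rule: rtrancl_induct)
  case base
  then show ?case by simp
next
  case (step y z)
  define t where "t = complex_of_real (L powi (M + int d + 1)) * \<nu> i"
  from step.hyps(2) have yz: "y \<in> G L N \<nu> M d" "z \<in> G L N \<nu> M d"
    "complex_vertices L N \<nu> M y \<inter> complex_vertices L N \<nu> M z \<noteq> {}"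
    unfolding Ed_def by auto
  then obtain w where w: "w \<in> complex_vertices L N \<nu> M y" "w \<in> complex_vertices L N \<nu> M z" by blast
  have "w + t \<in> complex_vertices L N \<nu> M (y + t)" "w + t \<in> complex_vertices L N \<nu> M (z + t)"
    unfolding cv_translate using w by auto
  moreover have "y + t \<in> G L N \<nu> M (Suc d)" "z + t \<in> G L N \<nu> M (Suc d)"
    unfolding t_def using G_Suc_comp yz assms(2) by auto
  ultimately have "(y + t, z + t) \<in> Ed L N \<nu> M (Suc d)" unfolding Ed_def by blast
  then show ?case using step.IH unfolding t_def by (rule rtrancl_into_rtrancl[rotated])
qed

lemma conn:
  assumes fr: "planar_simple_nested_fractal L N \<nu> K"
  shows "\<forall>s\<in>G L N \<nu> M d. \<forall>s'\<in>G L N \<nu> M d. (s, s') \<in> (Ed L N \<nu> M d)\<^sup>*"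
proof (induction d)
  case 0
  then show ?case using G_zero by simp
next
  case (Suc d)
  note ff = fractal_facts[OF fr]
  define T where "T = (\<lambda>i. complex_of_real (L powi (M + int d + 1)) * \<nu> i)"
  define C where "C = {(a, b). a \<in> {1..N} \<and> b \<in> {1..N} \<and>
                   Psi L \<nu> a ` V0 L N \<nu> \<inter> Psi L \<nu> b ` V0 L N \<nu> \<noteq> {}}"
  have L0: "complex_of_real L \<noteq> 0" using ff(1) by simp
  have PL: "complex_of_real (L powi (M + int d + 1)) = complex_of_real (L powi (M + int d)) * of_real L"
    by (rule powi_Suc_split[OF ff(1)])
  have key: "\<forall>s0'\<in>G L N \<nu> M d. (s0 + T i, s0' + T j) \<in> (Ed L N \<nu> M (Suc d))\<^sup>*"
    if ij: "(i, j) \<in> C\<^sup>*" and i: "i \<in> {1..N}" and s0: "s0 \<in> G L N \<nu> M d" for i j s0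
    using ij
  proof (induction rule: rtrancl_induct)
    case base
    show ?case using Suc.IH s0 translate_chain i unfolding T_def by blast
  next
    case (step j k)
    from step.hyps(2) have jk: "j \<in> {1..N}" "k \<in> {1..N}"
      "Psi L \<nu> j ` V0 L N \<nu> \<inter> Psi L \<nu> k ` V0 L N \<nu> \<noteq> {}" unfolding C_def by auto
    then obtain x y where xV: "x \<in> V0 L N \<nu>" and yV: "y \<in> V0 L N \<nu>"
      and pxy: "Psi L \<nu> j x = Psi L \<nu> k y" by blast
    obtain a where a: "a \<in> {1..N}" "\<nu> a = x - x / of_real L" using fix_nu[OF xV] by blast
    obtain b where b: "b \<in> {1..N}" "\<nu> b = y - y / of_real L" using fix_nu[OF yV] by blast
    obtain sx where sx: "sx \<in> G L N \<nu> M d"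
      "of_real (L powi (M + int d)) * x = of_real (L powi M) * x + sx"
      using fixpt_shift[where \<nu>=\<nu> and N=N and M=M and d=d, OF ff(1) a] by blast
    obtain sy where sy: "sy \<in> G L N \<nu> M d"
      "of_real (L powi (M + int d)) * y = of_real (L powi M) * y + sy"
      using fixpt_shift[where \<nu>=\<nu> and N=N and M=M and d=d, OF ff(1) b] by blast
    define q where "q = complex_of_real (L powi (M + int d + 1)) * Psi L \<nu> j x"
    have qx: "q = of_real (L powi M) * x + (sx + T j)"
      unfolding q_def T_def PL Psi_def using sx(2) L0
      by (simp add: field_simps)
    have qy: "q = of_real (L powi M) * y + (sy + T k)"
      unfolding q_def pxy unfolding T_def PL Psi_def using sy(2) L0
      by (simp add: field_simps)
    have "q \<in> complex_vertices L N \<nu> M (sx + T j)"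
      unfolding complex_vertices_def VMM_eq qx using xV by auto
    moreover have "q \<in> complex_vertices L N \<nu> M (sy + T k)"
      unfolding complex_vertices_def VMM_eq qy using yV by auto
    moreover have "sx + T j \<in> G L N \<nu> M (Suc d)" "sy + T k \<in> G L N \<nu> M (Suc d)"
      unfolding T_def using G_Suc_comp sx(1) sy(1) jk by auto
    ultimately have edge: "(sx + T j, sy + T k) \<in> Ed L N \<nu> M (Suc d)" unfolding Ed_def by blast
    show ?case
    proof
      fix s0' assume s0': "s0' \<in> G L N \<nu> M d"
      have "(s0 + T i, sx + T j) \<in> (Ed L N \<nu> M (Suc d))\<^sup>*" using step.IH sx(1) by blast
      then have "(s0 + T i, sy + T k) \<in> (Ed L N \<nu> M (Suc d))\<^sup>*" using edge by simp
      moreover have "(sy + T k, s0' + T k) \<in> (Ed L N \<nu> M (Suc d))\<^sup>*"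
        using Suc.IH sy(1) s0' translate_chain jk(2) unfolding T_def by blast
      ultimately show "(s0 + T i, s0' + T k) \<in> (Ed L N \<nu> M (Suc d))\<^sup>*" by simp
    qed
  qed
  show ?case
  proof (intro ballI)
    fix s s' assume s: "s \<in> G L N \<nu> M (Suc d)" and s': "s' \<in> G L N \<nu> M (Suc d)"
    obtain s0 i where s0: "s0 \<in> G L N \<nu> M d" "i \<in> {1..N}" "s = s0 + T i"
      using G_Suc_decomp[OF s] unfolding T_def by blast
    obtain s0' j where s0': "s0' \<in> G L N \<nu> M d" "j \<in> {1..N}" "s' = s0' + T j"
      using G_Suc_decomp[OF s'] unfolding T_def by blast
    have "(i, j) \<in> C\<^sup>*" using ff(7) s0(2) s0'(2) unfolding connectivity_condition_def C_def by blast
    then show "(s, s') \<in> (Ed L N \<nu> M (Suc d))\<^sup>*" using key s0 s0' by blast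
  qed
qed

lemma uniq:
  assumes fr: "planar_simple_nested_fractal L N \<nu> K"
    and g: "good_labelling L N \<nu> A M lab" and g': "good_labelling L N \<nu> A M lab'"
    and agree: "\<forall>v\<in>VMM L N \<nu> M. lab v = lab' v"
  shows "\<forall>v\<in>VMinf L N \<nu> M. lab v = lab' v"
proof
  note ff = fractal_facts[OF fr]
  have N1: "N \<ge> 1" using ff(2) by simp
  have nb: "\<forall>u\<in>VMM L N \<nu> M. u \<noteq> barycenter L N \<nu> M" using bary_ne[OF fr] by blast
  fix v assume "v \<in> VMinf L N \<nu> M"
  then obtain s where s: "s \<in> complex_shifts L N \<nu> M" and v: "v \<in> complex_vertices L N \<nu> M s"
    unfolding VMinf_def by blast
  obtain d where sd: "s \<in> G L N \<nu> M d" using shifts_G[OF s] by blast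
  have "(0, s) \<in> (Ed L N \<nu> M d)\<^sup>*" using conn[OF fr] zero_G[where \<nu>=\<nu> and N=N and L=L and M=M and d=d, OF ff(3) N1] sd by blast
  then have "\<forall>w\<in>complex_vertices L N \<nu> M s. lab w = lab' w"
  proof (induction rule: rtrancl_induct)
    case base
    have "complex_vertices L N \<nu> M 0 = VMM L N \<nu> M" unfolding complex_vertices_def by simp
    then show ?case using agree by simp
  next
    case (step y z)
    from step.hyps(2) have yz: "z \<in> G L N \<nu> M d"
      "complex_vertices L N \<nu> M y \<inter> complex_vertices L N \<nu> M z \<noteq> {}"
      unfolding Ed_def by auto
    then obtain w where w: "w \<in> complex_vertices L N \<nu> M y" "w \<in> complex_vertices L N \<nu> M z" by blast
    have zs: "z \<in> complex_shifts L N \<nu> M" using G_shifts[where \<nu>=\<nu> and N=N and L=L and M=M and d=d, OF ff(3) N1] yz(1) by blast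
    show ?case by (rule rot_det[OF nb g g' agree zs w(2)]) (use step.IH w(1) in blast)
  qed
  then show "lab v = lab' v" using v by blast
qed



lemma shift_scale:
  assumes L: "L > 1" and s: "s \<in> complex_shifts L N \<nu> M"
  shows "complex_of_real (L powi (M0 - M)) * s \<in> complex_shifts L N \<nu> M0"
proof -
  obtain J ii where s': "s = (\<Sum>j\<in>{M+1..J}. of_real (L powi j) * \<nu> (ii j))"
    and J: "J \<ge> M + 1" and ii: "\<forall>j\<in>{M+1..J}. ii j \<in> {1..N}"
    using s unfolding complex_shifts_def by blast
  define c where "c = M0 - M"
  define jj where "jj = (\<lambda>j. ii (j - c))"
  have img: "(\<lambda>j. j + c) ` {M+1..J} = {M0+1..J+c}"
    unfolding image_add_atLeastAtMost' c_def by (simp add: algebra_simps)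
  have inj: "inj_on (\<lambda>j::int. j + c) {M+1..J}" by (auto simp: inj_on_def)
  have "(\<Sum>j\<in>{M0+1..J+c}. of_real (L powi j) * \<nu> (jj j)) =
        (\<Sum>j\<in>{M+1..J}. of_real (L powi (j + c)) * \<nu> (jj (j + c)))"
    unfolding img[symmetric] by (subst sum.reindex[OF inj]) (simp add: o_def)
  also have "\<dots> = (\<Sum>j\<in>{M+1..J}. of_real (L powi c) * (of_real (L powi j) * \<nu> (ii j)))"
  proof (rule sum.cong)
    fix j assume "j \<in> {M+1..J}"
    have "L powi (j + c) = L powi c * L powi j" using L by (simp add: power_int_add)
    then show "complex_of_real (L powi (j + c)) * \<nu> (jj (j + c)) =
          of_real (L powi c) * (of_real (L powi j) * \<nu> (ii j))"
      by (simp add: jj_def)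
  qed simp
  also have "\<dots> = of_real (L powi c) * s" unfolding s' by (simp add: sum_distrib_left)
  finally have e: "of_real (L powi (M0 - M)) * s = (\<Sum>j\<in>{M0+1..J+c}. of_real (L powi j) * \<nu> (jj j))"
    unfolding c_def by simp
  show ?thesis
  proof (rule shiftsI[OF e])
    show "M0 + 1 \<le> J + c" using J c_def by simp
    show "\<forall>j\<in>{M0 + 1..J + c}. jj j \<in> {1..N}" using ii unfolding jj_def c_def by auto
  qed
qed

lemma scale_good:
  assumes L: "L > 1" and g0: "good_labelling L N \<nu> A M0 lab0"
  shows "good_labelling L N \<nu> A M (\<lambda>z. lab0 (complex_of_real (L powi (M0 - M)) * z))"
proof -
  define \<mu> where "\<mu> = complex_of_real (L powi (M0 - M))"
  define f where "f = (\<lambda>z. \<mu> * z)"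
  have mu0: "\<mu> \<noteq> 0" using L unfolding \<mu>_def by simp
  have injf: "inj f" unfolding f_def using mu0 by (auto simp: inj_def)
  have pw: "complex_of_real (L powi M0) = \<mu> * complex_of_real (L powi M)"
  proof -
    have "L powi M0 = L powi ((M0 - M) + M)" by simp
    also have "\<dots> = L powi (M0 - M) * L powi M" by (rule power_int_add) (use L in simp)
    finally show ?thesis unfolding \<mu>_def by simp
  qed
  have VMMeq: "VMM L N \<nu> M0 = f ` VMM L N \<nu> M"
    unfolding VMM_eq image_image f_def pw by (simp add: mult.assoc)
  have cvs: "complex_vertices L N \<nu> M0 (\<mu> * s) = f ` complex_vertices L N \<nu> M s" for s
    unfolding complex_vertices_def VMMeq image_image f_def by (simp add: algebra_simps)
  have bary: "barycenter L N \<nu> M0 = \<mu> * barycenter L N \<nu> M"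
  proof -
    have inj: "inj_on f (VMM L N \<nu> M)" using injf by (simp add: inj_on_def inj_def)
    show ?thesis unfolding barycenter_def VMMeq sum.reindex[OF inj] card_image[OF inj]
      by (simp add: f_def sum_distrib_left[symmetric])
  qed
  define lab where "lab = (\<lambda>z. lab0 (\<mu> * z))"
  have g0': "lab0 ` VMinf L N \<nu> M0 \<subseteq> A" "bij_betw lab0 (VMM L N \<nu> M0) A"
    "\<forall>s\<in>complex_shifts L N \<nu> M0. \<exists>R\<in>rotations L N \<nu> M0.
        \<forall>v\<in>complex_vertices L N \<nu> M0 s. lab0 v = lab0 (R (v - s))"
    using g0 unfolding good_labelling_def by auto
  have "good_labelling L N \<nu> A M lab"
    unfolding good_labelling_def
  proof (intro conjI ballI)
    show "lab ` VMinf L N \<nu> M \<subseteq> A"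
    proof
      fix y assume "y \<in> lab ` VMinf L N \<nu> M"
      then obtain v s where y: "y = lab v" and s: "s \<in> complex_shifts L N \<nu> M"
        and v: "v \<in> complex_vertices L N \<nu> M s" unfolding VMinf_def by blast
      have "\<mu> * v \<in> complex_vertices L N \<nu> M0 (\<mu> * s)" unfolding cvs f_def using v by blast
      moreover have "\<mu> * s \<in> complex_shifts L N \<nu> M0" using shift_scale[OF L s] unfolding \<mu>_def .
      ultimately have "\<mu> * v \<in> VMinf L N \<nu> M0" unfolding VMinf_def by blast
      then show "y \<in> A" using g0'(1) y unfolding lab_def by blast
    qed
    have "bij_betw f (VMM L N \<nu> M) (VMM L N \<nu> M0)"
      unfolding VMMeq using injf by (simp add: bij_betw_def inj_on_def inj_def)
    from bij_betw_trans[OF this g0'(2)]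
    show "bij_betw lab (VMM L N \<nu> M) A" unfolding lab_def f_def o_def .
  next
    fix s assume s: "s \<in> complex_shifts L N \<nu> M"
    have ms: "\<mu> * s \<in> complex_shifts L N \<nu> M0" using shift_scale[OF L s] unfolding \<mu>_def .
    obtain R0 where R0: "R0 \<in> rotations L N \<nu> M0"
      and H0: "\<forall>v\<in>complex_vertices L N \<nu> M0 (\<mu> * s). lab0 v = lab0 (R0 (v - \<mu> * s))"
      using g0'(3) ms by blast
    define c where "c = barycenter L N \<nu> M"
    obtain a where a: "norm a = 1" and R0a: "R0 = (\<lambda>z. \<mu> * c + a * (z - \<mu> * c))"
      and R0V: "R0 ` VMM L N \<nu> M0 = VMM L N \<nu> M0"
      using R0 unfolding rotations_def bary c_def by blast
    define R where "R = (\<lambda>z. c + a * (z - c))"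
    have fR: "f (R z) = R0 (f z)" for z unfolding f_def R_def R0a by (simp add: algebra_simps)
    have "f ` (R ` VMM L N \<nu> M) = f ` VMM L N \<nu> M"
    proof -
      have "f ` (R ` VMM L N \<nu> M) = R0 ` (f ` VMM L N \<nu> M)"
        unfolding image_image fR ..
      also have "\<dots> = f ` VMM L N \<nu> M" using R0V unfolding VMMeq .
      finally show ?thesis .
    qed
    then have RV: "R ` VMM L N \<nu> M = VMM L N \<nu> M" using injf by (simp add: inj_image_eq_iff)
    have Rrot: "R \<in> rotations L N \<nu> M" unfolding rotations_def c_def R_def
      using a RV unfolding R_def c_def by blast
    show "\<exists>R\<in>rotations L N \<nu> M. \<forall>v\<in>complex_vertices L N \<nu> M s. lab v = lab (R (v - s))"
    proof (intro bexI[OF _ Rrot] ballI)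
      fix v assume v: "v \<in> complex_vertices L N \<nu> M s"
      have "\<mu> * v \<in> complex_vertices L N \<nu> M0 (\<mu> * s)" unfolding cvs f_def using v by blast
      then have "lab0 (\<mu> * v) = lab0 (R0 (\<mu> * v - \<mu> * s))" using H0 by blast
      also have "R0 (\<mu> * v - \<mu> * s) = R0 (f (v - s))" unfolding f_def by (simp add: algebra_simps)
      also have "\<dots> = f (R (v - s))" by (simp add: fR)
      finally show "lab v = lab (R (v - s))" unfolding lab_def f_def .
    qed
  qed
  then show ?thesis unfolding lab_def \<mu>_def .
qed



lemma relabel_good:
  assumes g: "good_labelling L N \<nu> A M lab'" and sA: "\<sigma> ` A \<subseteq> A"
    and b: "bij_betw (\<lambda>z. \<sigma> (lab' z)) (VMM L N \<nu> M) A"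
  shows "good_labelling L N \<nu> A M (\<lambda>z. \<sigma> (lab' z))"
  using g sA b unfolding good_labelling_def by (auto simp: image_subset_iff) metis

theorem proposition3p5:
  fixes L :: real and N :: nat and \<nu> :: "nat \<Rightarrow> complex" and K :: "complex set"
    and A :: "'a set"
  assumes fractal: "planar_simple_nested_fractal L N \<nu> K"
    and alphabet: "finite A" "card A = card (V0 L N \<nu>)"
    and glp: "good_labelling_property L N \<nu> A"
  shows "\<forall>M::int.
     (\<forall>lab lab'. good_labelling L N \<nu> A M lab \<and> good_labelling L N \<nu> A M lab' \<longrightarrow>
        (\<exists>\<sigma>. bij_betw \<sigma> A A \<and> (\<forall>v\<in>VMinf L N \<nu> M. lab v = \<sigma> (lab' v)))) \<and>
     (\<forall>lt. bij_betw lt (VMM L N \<nu> M) A \<longrightarrow>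
        (\<exists>lab. good_labelling L N \<nu> A M lab \<and> (\<forall>v\<in>VMM L N \<nu> M. lab v = lt v) \<and>
             (\<forall>lab'. good_labelling L N \<nu> A M lab' \<and> (\<forall>v\<in>VMM L N \<nu> M. lab' v = lt v) \<longrightarrow>
                    (\<forall>v\<in>VMinf L N \<nu> M. lab' v = lab v))))"
proof (intro allI conjI impI)
  fix M :: int
  note ff = fractal_facts[OF fractal]
  obtain M0 and lab0 :: "complex \<Rightarrow> 'a" where g0: "good_labelling L N \<nu> A M0 lab0"
    using glp unfolding good_labelling_property_def by blast
  define labM where "labM = (\<lambda>z. lab0 (complex_of_real (L powi (M0 - M)) * z))"
  have gM: "good_labelling L N \<nu> A M labM" unfolding labM_def by (rule scale_good[OF ff(1) g0])
  define VM where "VM = VMM L N \<nu> M"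
  {
    fix lab lab' assume h: "good_labelling L N \<nu> A M lab \<and> good_labelling L N \<nu> A M lab'"
    then have g: "good_labelling L N \<nu> A M lab" and g': "good_labelling L N \<nu> A M lab'" by auto
    have b: "bij_betw lab VM A" and b': "bij_betw lab' VM A"
      using g g' unfolding good_labelling_def VM_def by auto
    define \<sigma> where "\<sigma> = (\<lambda>a. lab (inv_into VM lab' a))"
    have bs: "bij_betw \<sigma> A A" unfolding \<sigma>_def
      using bij_betw_trans[OF bij_betw_inv_into[OF b'] b] by (simp add: o_def)
    have eqv: "\<sigma> (lab' v) = lab v" if "v \<in> VM" for v
      unfolding \<sigma>_def bij_betw_inv_into_left[OF b' that] ..
    have b2: "bij_betw (\<lambda>z. \<sigma> (lab' z)) VM A" 
      by (rule bij_betw_cong[THEN iffD2, OF _ b]) (simp add: eqv)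
    have g2: "good_labelling L N \<nu> A M (\<lambda>z. \<sigma> (lab' z))"
      by (rule relabel_good[OF g' _ b2[unfolded VM_def]]) (use bs in \<open>simp add: bij_betw_def\<close>)
    have "\<forall>v\<in>VMinf L N \<nu> M. lab v = \<sigma> (lab' v)"
      by (rule uniq[OF fractal g g2]) (use eqv in \<open>simp add: VM_def\<close>)
    then show "\<exists>\<sigma>. bij_betw \<sigma> A A \<and> (\<forall>v\<in>VMinf L N \<nu> M. lab v = \<sigma> (lab' v))" using bs by blast
  }
  {
    fix lt assume blt: "bij_betw lt (VMM L N \<nu> M) A"
    have bM: "bij_betw labM VM A" using gM unfolding good_labelling_def VM_def by auto
    define \<sigma> where "\<sigma> = (\<lambda>a. lt (inv_into VM labM a))"
    have sA: "\<sigma> ` A \<subseteq> A"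
    proof
      fix y assume "y \<in> \<sigma> ` A"
      then obtain a where a: "a \<in> A" "y = \<sigma> a" by blast
      have "inv_into VM labM a \<in> VM" using bij_betw_inv_into[OF bM] a(1) by (simp add: bij_betw_def, blast)
      then show "y \<in> A" using blt a unfolding \<sigma>_def VM_def bij_betw_def by blast
    qed
    have eqv: "\<sigma> (labM v) = lt v" if "v \<in> VM" for v
      unfolding \<sigma>_def bij_betw_inv_into_left[OF bM that] ..
    have b2: "bij_betw (\<lambda>z. \<sigma> (labM z)) VM A" 
      by (rule bij_betw_cong[THEN iffD2, OF _ blt[folded VM_def]]) (simp add: eqv)
    have g2: "good_labelling L N \<nu> A M (\<lambda>z. \<sigma> (labM z))"
      by (rule relabel_good[OF gM sA b2[unfolded VM_def]])
    show "\<exists>lab. good_labelling L N \<nu> A M lab \<and> (\<forall>v\<in>VMM L N \<nu> M. lab v = lt v) \<and>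
             (\<forall>lab'. good_labelling L N \<nu> A M lab' \<and> (\<forall>v\<in>VMM L N \<nu> M. lab' v = lt v) \<longrightarrow>
                    (\<forall>v\<in>VMinf L N \<nu> M. lab' v = lab v))"
    proof (intro exI[of _ "\<lambda>z. \<sigma> (labM z)"] conjI allI impI ballI)
      show "good_labelling L N \<nu> A M (\<lambda>z. \<sigma> (labM z))" by (rule g2)
      show "\<sigma> (labM v) = lt v" if "v \<in> VMM L N \<nu> M" for v using eqv that unfolding VM_def by blast
      fix lab' v
      assume h: "good_labelling L N \<nu> A M lab' \<and> (\<forall>v\<in>VMM L N \<nu> M. lab' v = lt v)"
        and v: "v \<in> VMinf L N \<nu> M"
      have "\<forall>v\<in>VMinf L N \<nu> M. lab' v = \<sigma> (labM v)"
        by (rule uniq[OF fractal _ g2]) (use h eqv in \<open>auto simp: VM_def\<close>)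
      then show "lab' v = \<sigma> (labM v)" using v by blast
    qed
  }
qed

end
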